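(* For integers $n\ge2$ let $P_n$ denote the Legendre polynomials and define $$\tilde P_n(z)=\frac1{n+2}\Big(nP_n(z)-\frac2{n-1}P_{n-1}'(z)\Big).$$ Then $\tilde P_n=\partial_z G_n$ where $G_n$ solves $\big((1-z^2)G_{n,z}\big)_{,z}=(z^2-1)P_n'(z)$, and the polynomials $\tilde P_n$ are orthogonal on $[-1,1]$: $$\int_{-1}^1\tilde P_k(z)\tilde P_n(z)\,dz=\frac{2n(n+1)}{(n-1)(n+2)(2n+1)}\,\delta_{kn},\qquad k,n\ge2 .$$ *)

theory Defs
  imports "HOL-Analysis.Analysis" "HOL-Computational_Algebra.Polynomial"
begin

text \<open>Legendre polynomials, via Bonnet's recurrence:
  P_0 = 1, P_1 = z, (m+2) P_(m+2) = (2m+3) z P_(m+1) - (m+1) P_m.\<close>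
fun legendre :: "nat \<Rightarrow> real poly" where
  "legendre 0 = 1"
| "legendre (Suc 0) = [:0, 1:]"
| "legendre (Suc (Suc m)) =
     smult (1 / real (m + 2))
       (smult (real (2 * m + 3)) ([:0, 1:] * legendre (Suc m)) - smult (real (m + 1)) (legendre m))"

definition legendre_tilde :: "nat \<Rightarrow> real poly" where
  "legendre_tilde n =
     smult (1 / (real n + 2))
       (smult (real n) (legendre n) - smult (2 / (real n - 1)) (pderiv (legendre (n - 1))))"

end

theory Submission
  imports Defs
begin

abbreviation L where "L \<equiv> legendre"

lemma rec_eval:
  "(real m + 2) * poly (L (Suc (Suc m))) z = (2*real m + 3) * z * poly (L (Suc m)) z - (real m + 1) * poly (L m) z"
  by (simp add: field_simps)

lemma rec_deriv_eval:
  "(real m + 2) * poly (pderiv (L (Suc (Suc m)))) z = (2*real m + 3) * (poly (L (Suc m)) z + z * poly (pderiv (L (Suc m))) z) - (real m + 1) * poly (pderiv (L m)) z"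
  by (simp add: field_simps pderiv_smult pderiv_diff pderiv_mult pderiv_pCons)

lemma AD:
  "z * poly (pderiv (L (Suc m))) z - poly (pderiv (L m)) z = (real m + 1) * poly (L (Suc m)) z \<and>
   (z*z - 1) * poly (pderiv (L (Suc m))) z = (real m + 1) * (z * poly (L (Suc m)) z - poly (L m) z)"
proof (induction m arbitrary: z)
  case 0
  then show ?case by (simp add: pderiv_pCons algebra_simps)
next
  case (Suc m)
  define p where "p = poly (L m) z"
  define q where "q = poly (L (Suc m)) z"
  define r where "r = poly (L (Suc (Suc m))) z"
  define p' where "p' = poly (pderiv (L m)) z"
  define q' where "q' = poly (pderiv (L (Suc m))) z"
  define r' where "r' = poly (pderiv (L (Suc (Suc m)))) z"
  have A: "z*q' - p' = (real m + 1) * q" and D: "(z*z-1)*q' = (real m + 1)*(z*q - p)"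
    using Suc.IH[of z] unfolding p_def q_def p'_def q'_def by auto
  have R: "(real m + 2) * r = (2*real m + 3) * z * q - (real m + 1) * p"
    unfolding r_def q_def p_def by (rule rec_eval)
  have R': "(real m + 2) * r' = (2*real m + 3) * (q + z * q') - (real m + 1) * p'"
    unfolding r'_def q_def p'_def q'_def by (rule rec_deriv_eval)
  have p'e: "p' = z*q' - (real m + 1) * q" using A by simp
  have "(real m + 2) * r' = (real m + 2) * (z*q' + (real m + 2) * q)"
    unfolding R' p'e by (simp add: algebra_simps power2_eq_square)
  hence C: "r' = z*q' + (real m + 2) * q" by (smt (verit) mult_cancel_left of_nat_0_le_iff)
  have pos: "real m + 1 \<noteq> 0" "real m + 2 \<noteq> 0" by linarith+
  have D0: "(z*z-1)*q' - (real m+1)*(z*q-p) = 0" using D by simp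
  have R0: "(real m + 2) * r - ((2*real m + 3) * z * q - (real m + 1) * p) = 0" using R by simp
  have "(real m + 2)*((z*r'-q') - (real m+2)*r) = (real m + 2)*((z*z-1)*q' - (real m+1)*(z*q-p)) - (real m+2)*((real m + 2) * r - ((2*real m + 3) * z * q - (real m + 1) * p))"
    unfolding C by (simp add: algebra_simps)
  hence "(real m + 2)*((z*r'-q') - (real m+2)*r) = 0" unfolding D0 R0 by simp
  hence G1: "z * r' - q' = (real (Suc m) + 1) * r" using pos by simp
  have "(real m + 2)*((z*z-1)*r' - (real m+2)*(z*r-q)) = (real m + 2)*z*((z*z-1)*q' - (real m+1)*(z*q-p)) - (real m+2)*z*((real m + 2) * r - ((2*real m + 3) * z * q - (real m + 1) * p))"
    unfolding C by (simp add: algebra_simps)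
  hence "(real m + 2)*((z*z-1)*r' - (real m+2)*(z*r-q)) = 0" unfolding D0 R0 by simp
  hence G2: "(z*z - 1) * r' = (real (Suc m) + 1) * (z * r - q)" using pos by simp
  show ?case using G1 G2 unfolding r'_def r_def q'_def q_def by simp
qed

lemma lin: "(a::real) - b = k*(c - d) \<Longrightarrow> c = d \<Longrightarrow> a = b" by simp

definition X :: "real poly" where "X = [:0,1:]"
definition W :: "real poly" where "W = [:1,0,-1:]"
lemma poly_X[simp]: "poly X z = z" by (simp add: X_def)
lemma poly_W[simp]: "poly W z = 1 - z*z" by (simp add: W_def)
lemma pderiv_X[simp]: "pderiv X = 1" by (simp add: X_def pderiv_pCons)
lemma pderiv_W[simp]: "pderiv W = smult (-2) X" by (simp add: W_def X_def pderiv_pCons)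

lemma A_eval: "poly (pderiv (L (n - 1))) z = z * poly (pderiv (L n)) z - real n * poly (L n) z"
proof (cases n)
  case 0 then show ?thesis by simp
next
  case (Suc m)
  have h: "z * poly (pderiv (L (Suc m))) z - poly (pderiv (L m)) z = (real m + 1) * poly (L (Suc m)) z"
    using AD[of z m] by blast
  show ?thesis unfolding Suc diff_Suc_1 of_nat_Suc add.commute[of 1 "real m"] using h by linarith
qed

lemma D_poly: "W * pderiv (L n) = smult (real n) (L (n - 1) - X * L n)"
proof (cases n)
  case 0 then show ?thesis by simp
next
  case (Suc m)
  show ?thesis unfolding poly_eq_poly_eq_iff[symmetric]
  proof
    fix z show "poly (W * pderiv (L n)) z = poly (smult (real n) (L (n - 1) - X * L n)) z"
      unfolding Suc diff_Suc_1 of_nat_Suc poly_mult poly_smult poly_diff poly_W poly_X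
      apply (rule lin[where k="-1", OF _ conjunct2[OF AD[of z m]]])
      by (simp add: algebra_simps)
  qed
qed

lemma E_poly: "pderiv (W * pderiv (L n)) = smult (- (real n * (real n + 1))) (L n)"
proof -
  have "pderiv (W * pderiv (L n)) = smult (real n) (pderiv (L (n - 1)) - L n - X * pderiv (L n))"
    unfolding D_poly by (simp add: pderiv_smult pderiv_diff pderiv_mult algebra_simps)
  also have "\<dots> = smult (- (real n * (real n + 1))) (L n)"
    unfolding poly_eq_poly_eq_iff[symmetric]
  proof
    fix z show "poly (smult (real n) (pderiv (L (n - 1)) - L n - X * pderiv (L n))) z =
      poly (smult (- (real n * (real n + 1))) (L n)) z"
      unfolding poly_smult poly_diff poly_mult A_eval by (simp add: algebra_simps)
  qed
  finally show ?thesis .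
qed

lemma E_eval: "(1 - z*z) * poly (pderiv (pderiv (L n))) z - 2 * z * poly (pderiv (L n)) z
   = - (real n * (real n + 1)) * poly (L n) z"
  using arg_cong[OF E_poly, of "\<lambda>p. poly p z"] by (simp add: pderiv_mult algebra_simps)

lemma E1_eval: "(1 - z*z) * poly (pderiv (pderiv (pderiv (L n)))) z - 4 * z * poly (pderiv (pderiv (L n))) z
   - 2 * poly (pderiv (L n)) z = - (real n * (real n + 1)) * poly (pderiv (L n)) z"
  using arg_cong[OF arg_cong[OF E_poly, of pderiv], of "\<lambda>p. poly p z"]
  by (simp add: pderiv_mult pderiv_smult pderiv_add pderiv_diff algebra_simps)

lemma alg1: "(x::real) - 1 \<noteq> 0 \<Longrightarrow> x + 2 \<noteq> 0 \<Longrightarrow>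
  1/(x+2)*(x*p - 2/(x-1)*(z*q - x*p)) = -1/((x-1)*(x+2)) * (2*z*q - x*(x+1)*p)"
proof -
  assume a: "x - 1 \<noteq> 0" "x + 2 \<noteq> 0"
  hence "(x-1)*(x+2) \<noteq> 0" by simp
  hence h: "x + x*x - 2 \<noteq> 0" by (simp add: algebra_simps)
  show ?thesis using a h by (simp add: field_simps)
qed

lemma alg2: "(x::real) - 1 \<noteq> 0 \<Longrightarrow> x + 2 \<noteq> 0 \<Longrightarrow> - 1 / ((x - 1) * (x + 2)) * (2 - (x * (x + 1))) = 1"
proof -
  assume a: "x - 1 \<noteq> 0" "x + 2 \<noteq> 0"
  hence "(x-1)*(x+2) \<noteq> 0" by simp
  hence h: "x + x*x - 2 \<noteq> 0" by (simp add: algebra_simps)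
  show ?thesis using a h by (simp add: field_simps)
qed

lemma T_poly:
  assumes "2 \<le> n"
  shows "legendre_tilde n = smult (- 1 / ((real n - 1) * (real n + 2))) (W * pderiv (pderiv (L n)))"
  unfolding poly_eq_poly_eq_iff[symmetric]
proof
  fix z
  have n1: "real n - 1 \<noteq> 0" "real n + 2 \<noteq> 0" using assms by auto
  have e: "(1 - z*z) * poly (pderiv (pderiv (L n))) z = 2 * z * poly (pderiv (L n)) z - (real n * (real n + 1)) * poly (L n) z"
    using E_eval[of z n] by (simp add: algebra_simps)
  show "poly (legendre_tilde n) z = poly (smult (- 1 / ((real n - 1) * (real n + 2))) (W * pderiv (pderiv (L n)))) z"
    unfolding legendre_tilde_def poly_smult poly_diff A_eval poly_mult poly_W mult.assoc[symmetric, of "- 1 / ((real n - 1) * (real n + 2))"] e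
    using alg1[OF n1] by simp
qed

lemma F1_poly:
  assumes "2 \<le> n"
  shows "pderiv (W * legendre_tilde n) = W * pderiv (L n)"
  unfolding poly_eq_poly_eq_iff[symmetric]
proof
  fix z
  have n1: "real n - 1 \<noteq> 0" "real n + 2 \<noteq> 0" using assms by auto
  have e: "(1 - z*z) * poly (pderiv (pderiv (pderiv (L n)))) z - 4 * z * poly (pderiv (pderiv (L n))) z
     = (2 - (real n * (real n + 1))) * poly (pderiv (L n)) z"
    using E1_eval[of z n] by (simp add: algebra_simps)
  define c where "c = - 1 / ((real n - 1) * (real n + 2))"
  have c1: "c * (2 - (real n * (real n + 1))) = 1" unfolding c_def using alg2[OF n1] .
  have "poly (pderiv (W * legendre_tilde n)) z = c * ((1 - z*z) *
     ((1 - z*z) * poly (pderiv (pderiv (pderiv (L n)))) z - 4 * z * poly (pderiv (pderiv (L n))) z))"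
    unfolding T_poly[OF assms] c_def[symmetric] pderiv_smult pderiv_mult pderiv_W poly_smult poly_mult poly_add poly_W poly_X by (simp add: algebra_simps)
  also have "\<dots> = (c * (2 - (real n * (real n + 1)))) * ((1 - z*z) * poly (pderiv (L n)) z)"
    unfolding e by (simp add: algebra_simps)
  also have "\<dots> = poly (W * pderiv (L n)) z" unfolding c1 by simp
  finally show "poly (pderiv (W * legendre_tilde n)) z = poly (W * pderiv (L n)) z" .
qed

definition I :: "real poly \<Rightarrow> real" where "I p = integral {-1..1} (poly p)"

lemma integ: "poly (p::real poly) integrable_on {-1..1}"
  using integrable_continuous_real[of "-1" 1 "\<lambda>x. poly p x"] continuous_on_poly[OF continuous_on_id, of "{-1..1}" p] by simp

lemma I_add: "I (p + q) = I p + I q"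
proof -
  have e: "poly (p + q) = (\<lambda>x. poly p x + poly q x)" by (rule ext) simp
  have "I (p + q) = integral {-1..1} (\<lambda>x. poly p x + poly q x)" unfolding I_def e ..
  also have "\<dots> = I p + I q" unfolding I_def by (rule integral_add[OF integ integ])
  finally show ?thesis .
qed

lemma I_smult: "I (smult c p) = c * I p"
proof -
  have e: "poly (smult c p) = (\<lambda>x. c * poly p x)" by (rule ext) simp
  have "I (smult c p) = integral {-1..1} (\<lambda>x. c * poly p x)" unfolding I_def e ..
  also have "\<dots> = c * I p" unfolding I_def using integral_mult[OF integ, of c p] by simp
  finally show ?thesis .
qed

lemma I_diff: "I (p - q) = I p - I q"
  using I_add[of p "smult (-1) q"] I_smult[of "-1" q] by simp

lemma I_pderiv: "I (pderiv p) = poly p 1 - poly p (-1)"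
proof -
  have "((\<lambda>x. poly (pderiv p) x) has_integral (poly p 1 - poly p (-1))) {-1..1}"
    by (rule fundamental_theorem_of_calculus)
       (auto simp: has_real_derivative_iff_has_vector_derivative[symmetric] intro: has_field_derivative_at_within poly_DERIV)
  thus ?thesis unfolding I_def by (rule integral_unique)
qed

lemma I_parts: "I (p * pderiv q) = poly (p*q) 1 - poly (p*q) (-1) - I (q * pderiv p)"
  using I_pderiv[of "p*q"] unfolding pderiv_mult I_add by simp

lemma W_pm1: "poly W 1 = 0" "poly W (-1) = 0" by simp_all

lemma I_WPP: "I (W * pderiv (L k) * pderiv (L n)) = real k * (real k + 1) * I (L k * L n)"
proof -
  have "I (W * pderiv (L k) * pderiv (L n)) = - I (L n * pderiv (W * pderiv (L k)))"
    using I_parts[of "W * pderiv (L k)" "L n"] by simp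
  also have "\<dots> = real k * (real k + 1) * I (L k * L n)"
    unfolding E_poly mult_smult_right I_smult by (simp add: mult.commute)
  finally show ?thesis .
qed

lemma orth: "k \<noteq> n \<Longrightarrow> I (L k * L n) = 0"
proof -
  assume kn: "k \<noteq> n"
  have "real k * (real k + 1) * I (L k * L n) = real n * (real n + 1) * I (L k * L n)"
    using I_WPP[of k n] I_WPP[of n k] by (simp add: mult_ac)
  moreover have "real k * (real k + 1) \<noteq> real n * (real n + 1)"
  proof
    assume "real k * (real k + 1) = real n * (real n + 1)"
    hence "k * (k+1) = n * (n+1)" by (metis of_nat_1 of_nat_add of_nat_eq_iff of_nat_mult)
    moreover have "k < n \<Longrightarrow> k * (k+1) < n * (n+1)" by (intro mult_strict_mono) auto
    moreover have "n < k \<Longrightarrow> n * (n+1) < k * (k+1)" by (intro mult_strict_mono) auto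
    ultimately show False using kn by linarith
  qed
  ultimately show ?thesis by simp
qed

lemma rec_poly: "smult (real m + 2) (L (Suc (Suc m))) = smult (2*real m + 3) (X * L (Suc m)) - smult (real m + 1) (L m)"
  unfolding poly_eq_poly_eq_iff[symmetric] by (rule ext) (simp add: rec_eval[simplified] mult.assoc)

lemma alg3: "(b::real) \<noteq> 0 \<Longrightarrow> b * (x/b/c) = x/c"
  by (simp add: divide_divide_eq_left)

lemma norm: "I (L n * L n) = 2 / (2 * real n + 1)"
proof (induction n rule: less_induct)
  case (less n)
  show ?case
  proof (cases n)
    case 0
    have "I (L n * L n) = I (pderiv X)" using 0 by simp
    also have "\<dots> = 2" unfolding I_pderiv by simp
    finally show ?thesis using 0 by simp
  next
    case (Suc m)
    show ?thesis
    proof (cases m)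
      case 0
      have "L n * L n = pderiv [:0,0,0,1/3:]" using Suc 0 by (simp add: pderiv_pCons)
      hence "I (L n * L n) = poly [:0,0,0,1/3:] 1 - poly [:0,0,0,1/3:] (-1)" using I_pderiv by simp
      thus ?thesis using Suc 0 by simp
    next
      case (Suc j)
      hence nj: "n = Suc (Suc j)" using \<open>n = Suc m\<close> by simp
      have IH: "I (L (Suc j) * L (Suc j)) = 2 / (2 * real (Suc j) + 1)" using less nj by simp
      have a: "(real j + 2) * I (L (Suc (Suc j)) * L (Suc (Suc j))) = (2*real j + 3) * I (L (Suc (Suc j)) * (X * L (Suc j)))"
      proof -
        have "(real j + 2) * I (L (Suc (Suc j)) * L (Suc (Suc j))) = I (L (Suc (Suc j)) * smult (real j + 2) (L (Suc (Suc j))))"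
          by (simp add: I_smult del: legendre.simps)
        also have "\<dots> = (2*real j + 3) * I (L (Suc (Suc j)) * (X * L (Suc j))) - (real j + 1) * I (L (Suc (Suc j)) * L j)"
          unfolding rec_poly by (simp add: algebra_simps I_smult I_diff del: legendre.simps)
        also have "I (L (Suc (Suc j)) * L j) = 0" by (rule orth) simp
        finally show ?thesis by simp
      qed
      have b: "(2*real j + 5) * I (L (Suc (Suc j)) * (X * L (Suc j))) = (real j + 2) * I (L (Suc j) * L (Suc j))"
      proof -
        have "(2*real j + 5) * I (L (Suc (Suc j)) * (X * L (Suc j))) = I (L (Suc j) * smult (2 * real (Suc j) + 3) (X * L (Suc (Suc j))))"
          by (simp add: I_smult algebra_simps del: legendre.simps)
        also have "smult (2 * real (Suc j) + 3) (X * L (Suc (Suc j))) = smult (real (Suc j) + 2) (L (Suc (Suc (Suc j)))) + smult (real (Suc j) + 1) (L (Suc j))"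
          using rec_poly[of "Suc j"] by (simp add: algebra_simps del: legendre.simps)
        also have "I (L (Suc j) * \<dots>) = (real (Suc j) + 2) * I (L (Suc j) * L (Suc (Suc (Suc j)))) + (real (Suc j) + 1) * I (L (Suc j) * L (Suc j))"
          by (simp add: algebra_simps I_smult I_add del: legendre.simps)
        also have "I (L (Suc j) * L (Suc (Suc (Suc j)))) = 0" by (rule orth) simp
        finally show ?thesis by simp
      qed
      have p1: "real j + 2 \<noteq> 0" "2 * real j + 5 \<noteq> 0" "2 * real j + 3 \<noteq> 0" by linarith+
      have b': "I (L (Suc (Suc j)) * (X * L (Suc j))) = (real j + 2) * I (L (Suc j) * L (Suc j)) / (2*real j + 5)"
        using b p1 by (simp add: field_simps del: legendre.simps)
      have "(real j + 2) * I (L (Suc (Suc j)) * L (Suc (Suc j))) = (real j + 2) * ((2*real j + 3) * (I (L (Suc j) * L (Suc j)) / (2*real j + 5)))"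
        unfolding a b' by (simp add: algebra_simps del: legendre.simps)
      hence "I (L (Suc (Suc j)) * L (Suc (Suc j))) = (2*real j + 3) * (I (L (Suc j) * L (Suc j)) / (2*real j + 5))"
        using mult_left_cancel[OF p1(1)] by blast
      also have "\<dots> = 2 / (2 * real j + 5)"
      proof -
        have eq: "2 * real (Suc j) + 1 = 2*real j + 3" by simp
        show ?thesis unfolding IH eq using alg3[OF p1(3)] .
      qed
      also have "\<dots> = 2 / (2 * real n + 1)" unfolding nj by (simp add: algebra_simps)
      finally show ?thesis using nj by simp
    qed
  qed
qed

lemma antider: "\<exists>H. pderiv H = (p::real poly)"
proof -
  have "pderiv (\<Sum>i\<le>degree p. monom (coeff p i / real (Suc i)) (Suc i)) = (\<Sum>i\<le>degree p. monom (coeff p i) i)"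
    using higher_pderiv_sum[of 1 "\<lambda>i. monom (coeff p i / real (Suc i)) (Suc i)" "{..degree p}"]
    by (simp add: pderiv_monom del: of_nat_Suc)
  thus ?thesis using poly_as_sum_of_monoms by metis
qed

lemma alg4: "(x::real) * (x + 1) / ((x - 1) * (x + 2)) * (2 / (2 * x + 1)) = 2 * x * (x + 1) / ((x - 1) * (x + 2) * (2 * x + 1))"
  by (simp add: times_divide_times_eq mult_ac)

lemma key: assumes "2 \<le> k" "2 \<le> n"
  shows "I (legendre_tilde k * legendre_tilde n) = real k * (real k + 1) / ((real k - 1) * (real k + 2)) * I (L k * L n)"
proof -
  define c where "c = - 1 / ((real k - 1) * (real k + 2))"
  have "legendre_tilde k * legendre_tilde n = smult c ((W * legendre_tilde n) * pderiv (pderiv (L k)))"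
    unfolding T_poly[OF assms(1)] c_def by (simp add: mult_ac)
  hence "I (legendre_tilde k * legendre_tilde n) = c * I ((W * legendre_tilde n) * pderiv (pderiv (L k)))"
    by (simp add: I_smult)
  also have "I ((W * legendre_tilde n) * pderiv (pderiv (L k))) = - I (pderiv (L k) * (W * pderiv (L n)))"
    using I_parts[of "W * legendre_tilde n" "pderiv (L k)"] unfolding F1_poly[OF assms(2)] by simp
  also have "pderiv (L k) * (W * pderiv (L n)) = W * pderiv (L k) * pderiv (L n)" by (simp add: mult_ac)
  also have "I \<dots> = real k * (real k + 1) * I (L k * L n)" by (rule I_WPP)
  finally show ?thesis unfolding c_def by simp
qed

theorem mainTheorem4:
  fixes k n :: nat
  assumes "2 \<le> k" and "2 \<le> n"
  shows "(\<exists>G :: real \<Rightarrow> real.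
            (\<forall>z. (G has_real_derivative poly (legendre_tilde n) z) (at z)) \<and>
            (\<forall>z. ((\<lambda>x. (1 - x\<^sup>2) * deriv G x) has_real_derivative
                   (1 - z\<^sup>2) * poly (pderiv (legendre n)) z) (at z)))
       \<and> integral {-1..1} (\<lambda>z. poly (legendre_tilde k) z * poly (legendre_tilde n) z)
           = (if k = n then 2 * real n * (real n + 1) /
                 ((real n - 1) * (real n + 2) * (2 * real n + 1)) else 0)"
proof
  obtain H where H: "pderiv H = legendre_tilde n" using antider by blast
  have d1: "\<And>z. (poly H has_real_derivative poly (legendre_tilde n) z) (at z)"
    using poly_DERIV[of H] unfolding H by blast
  have dG: "deriv (poly H) = poly (legendre_tilde n)"
    by (rule ext) (rule DERIV_imp_deriv[OF d1])
  have f: "(\<lambda>x. (1 - x\<^sup>2) * deriv (poly H) x) = poly (W * legendre_tilde n)"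
    unfolding dG by (rule ext) (simp add: power2_eq_square)
  have d2: "\<And>z. ((\<lambda>x. (1 - x\<^sup>2) * deriv (poly H) x) has_real_derivative
                   (1 - z\<^sup>2) * poly (pderiv (legendre n)) z) (at z)"
  proof -
    fix z
    have "(poly (W * legendre_tilde n) has_real_derivative poly (pderiv (W * legendre_tilde n)) z) (at z)"
      using poly_DERIV by blast
    thus "((\<lambda>x. (1 - x\<^sup>2) * deriv (poly H) x) has_real_derivative
                   (1 - z\<^sup>2) * poly (pderiv (legendre n)) z) (at z)"
      unfolding f F1_poly[OF assms(2)] by (simp add: power2_eq_square)
  qed
  show "\<exists>G :: real \<Rightarrow> real.
            (\<forall>z. (G has_real_derivative poly (legendre_tilde n) z) (at z)) \<and>
            (\<forall>z. ((\<lambda>x. (1 - x\<^sup>2) * deriv G x) has_real_derivative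
                   (1 - z\<^sup>2) * poly (pderiv (legendre n)) z) (at z))"
    using d1 d2 by blast
next
  have e: "integral {-1..1} (\<lambda>z. poly (legendre_tilde k) z * poly (legendre_tilde n) z) = I (legendre_tilde k * legendre_tilde n)"
    unfolding I_def by (simp add: poly_mult[abs_def])
  have v: "integral {-1..1} (\<lambda>z. poly (legendre_tilde k) z * poly (legendre_tilde n) z) = real k * (real k + 1) / ((real k - 1) * (real k + 2)) * I (L k * L n)"
    unfolding e key[OF assms] ..
  show "integral {-1..1} (\<lambda>z. poly (legendre_tilde k) z * poly (legendre_tilde n) z)
           = (if k = n then 2 * real n * (real n + 1) /
                 ((real n - 1) * (real n + 2) * (2 * real n + 1)) else 0)"
  proof (cases "k = n")
    case True
    have n1: "real n - 1 \<noteq> 0" "real n + 2 \<noteq> 0" "2 * real n + 1 \<noteq> 0" using assms by auto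
    show ?thesis using v unfolding True norm[of n] by (simp add: alg4)
  next
    case False
    show ?thesis unfolding v using False orth[OF False] by simp
  qed
qed

end
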